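(* Let $(\Phi,D)$ be a domain-free continuous information algebra and $(\Psi,D)$ its associated labeled information algebra. Let $x\in D$ and $\psi,\phi\in\Phi$ with $\psi=\psi^{\Rightarrow x}$ and $\phi=\phi^{\Rightarrow x}$. Then $\psi\ll\phi$ implies $(\psi,x)\ll_x(\phi,x)$. Furthermore, if $(\Phi,D)$ is s-continuous, then $\psi\ll\phi$ if and only if $(\psi,x)\ll_x(\phi,x)$.
   Context: A domain-free information algebra $(\Phi,D)$ consists of a set $\Phi$, a lattice $D$, a combination $\otimes$ and a focusing $(\psi,x)\mapsto\psi^{\Rightarrow x}$ ($x\in D$) such that: $\otimes$ is associative, commutative with neutral element $e$; $(\psi^{\Rightarrow y})^{\Rightarrow x}=\psi^{\Rightarrow x\wedge y}$; $(\phi^{\Rightarrow x}\otimes\psi)^{\Rightarrow x}=\phi^{\Rightarrow x}\otimes\psi^{\Rightarrow x}$; every $\psi$ has some $x$ with $\psi^{\Rightarrow x}=\psi$; $\psi\otimes\psi^{\Rightarrow x}=\psi$. Order: $\psi\le\phi$ iff $\psi\otimes\phi=\phi$ (same definition in the labeled algebra below); suprema refer to this order. $a\ll b$ means: for every directed $X$ with $b\le\vee X$ there is $c\in X$ with $a\le c$. $(\Phi,D)$, with $D$ having a top element, is continuous (resp. s-continuous) if there exists $\Gamma\subseteq\Phi$, closed under combination and containing $e$, such that every directed subset of $\Gamma$ has a supremum in $\Phi$ and $\phi=\vee\{\psi\in\Gamma:\psi\ll\phi\}$ for all $\phi$ (resp. $\phi^{\Rightarrow x}=\vee\{\psi\in\Gamma:\psi=\psi^{\Rightarrow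 x}\ll\phi\}$ for all $\phi,x$). The associated labeled information algebra $(\Psi,D)$ has $\Psi=\{(\phi,x)\in\Phi\times D:\phi=\phi^{\Rightarrow x}\}$, labeling $d(\phi,x)=x$, combination $(\phi,x)\otimes(\psi,y)=(\phi\otimes\psi,x\vee y)$ and marginalization $(\phi,x)^{\downarrow y}=(\phi^{\Rightarrow y},y)$ for $y\le x$. $\Psi_x=\{(\phi,x)\in\Psi\}$, and $\ll_x$ is the way-below relation in the poset $(\Psi_x,\le)$. *)

theory Defs
  imports Main
begin

definition directed_in :: "('a \<Rightarrow> 'a \<Rightarrow> bool) \<Rightarrow> 'a set \<Rightarrow> bool" where
  "directed_in le X \<longleftrightarrow> X \<noteq> {} \<and> (\<forall>a\<in>X. \<forall>b\<in>X. \<exists>c\<in>X. le a c \<and> le b c)"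

definition is_lub_in :: "('a \<Rightarrow> 'a \<Rightarrow> bool) \<Rightarrow> 'a set \<Rightarrow> 'a set \<Rightarrow> 'a \<Rightarrow> bool" where
  "is_lub_in le S X s \<longleftrightarrow> s \<in> S \<and> (\<forall>a\<in>X. le a s) \<and> (\<forall>u\<in>S. (\<forall>a\<in>X. le a u) \<longrightarrow> le s u)"

definition way_below_in :: "('a \<Rightarrow> 'a \<Rightarrow> bool) \<Rightarrow> 'a set \<Rightarrow> 'a \<Rightarrow> 'a \<Rightarrow> bool" where
  "way_below_in le S a b \<longleftrightarrow>
     (\<forall>X. X \<subseteq> S \<longrightarrow> directed_in le X \<longrightarrow>
        (\<forall>s. is_lub_in le S X s \<longrightarrow> le b s \<longrightarrow> (\<exists>c\<in>X. le a c)))"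

text \<open>\<Phi> is the type 'a, D is the lattice type 'd; comb is \<otimes>, e the neutral element,
  foc \<psi> x is the focusing \<psi>^{\<Rightarrow>x}.\<close>

definition domain_free_ia ::
  "('a \<Rightarrow> 'a \<Rightarrow> 'a) \<Rightarrow> 'a \<Rightarrow> ('a \<Rightarrow> 'd::lattice \<Rightarrow> 'a) \<Rightarrow> bool" where
  "domain_free_ia comb e foc \<longleftrightarrow>
     (\<forall>a b c. comb (comb a b) c = comb a (comb b c)) \<and>
     (\<forall>a b. comb a b = comb b a) \<and>
     (\<forall>a. comb e a = a) \<and>
     (\<forall>\<psi> x y. foc (foc \<psi> y) x = foc \<psi> (inf x y)) \<and>
     (\<forall>\<phi> \<psi> x. foc (comb (foc \<phi> x) \<psi>) x = comb (foc \<phi> x) (foc \<psi> x)) \<and>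
     (\<forall>\<psi>. \<exists>x. foc \<psi> x = \<psi>) \<and>
     (\<forall>\<psi> x. comb \<psi> (foc \<psi> x) = \<psi>)"

definition info_le :: "('a \<Rightarrow> 'a \<Rightarrow> 'a) \<Rightarrow> 'a \<Rightarrow> 'a \<Rightarrow> bool" where
  "info_le comb a b \<longleftrightarrow> comb a b = b"

definition df_way_below :: "('a \<Rightarrow> 'a \<Rightarrow> 'a) \<Rightarrow> 'a \<Rightarrow> 'a \<Rightarrow> bool" where
  "df_way_below comb a b \<longleftrightarrow> way_below_in (info_le comb) UNIV a b"

definition basis_cond :: "('a \<Rightarrow> 'a \<Rightarrow> 'a) \<Rightarrow> 'a \<Rightarrow> 'a set \<Rightarrow> bool" where
  "basis_cond comb e \<Gamma> \<longleftrightarrow>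
     (\<forall>a\<in>\<Gamma>. \<forall>b\<in>\<Gamma>. comb a b \<in> \<Gamma>) \<and> e \<in> \<Gamma> \<and>
     (\<forall>X. X \<subseteq> \<Gamma> \<longrightarrow> directed_in (info_le comb) X \<longrightarrow>
          (\<exists>s. is_lub_in (info_le comb) UNIV X s))"

definition continuous_ia ::
  "('a \<Rightarrow> 'a \<Rightarrow> 'a) \<Rightarrow> 'a \<Rightarrow> ('a \<Rightarrow> 'd::lattice \<Rightarrow> 'a) \<Rightarrow> bool" where
  "continuous_ia comb e foc \<longleftrightarrow>
     (\<exists>t::'d. \<forall>x. x \<le> t) \<and>
     (\<exists>\<Gamma>. basis_cond comb e \<Gamma> \<and>
        (\<forall>\<phi>. is_lub_in (info_le comb) UNIV {\<psi>\<in>\<Gamma>. df_way_below comb \<psi> \<phi>} \<phi>))"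

definition s_continuous_ia ::
  "('a \<Rightarrow> 'a \<Rightarrow> 'a) \<Rightarrow> 'a \<Rightarrow> ('a \<Rightarrow> 'd::lattice \<Rightarrow> 'a) \<Rightarrow> bool" where
  "s_continuous_ia comb e foc \<longleftrightarrow>
     (\<exists>t::'d. \<forall>x. x \<le> t) \<and>
     (\<exists>\<Gamma>. basis_cond comb e \<Gamma> \<and>
        (\<forall>\<phi> x. is_lub_in (info_le comb) UNIV
                 {\<psi>\<in>\<Gamma>. \<psi> = foc \<psi> x \<and> df_way_below comb \<psi> \<phi>} (foc \<phi> x)))"

definition labeled_carrier :: "('a \<Rightarrow> 'd \<Rightarrow> 'a) \<Rightarrow> ('a \<times> 'd) set" where
  "labeled_carrier foc = {(\<phi>, x). \<phi> = foc \<phi> x}"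

definition labeled_comb ::
  "('a \<Rightarrow> 'a \<Rightarrow> 'a) \<Rightarrow> ('a \<times> 'd::lattice) \<Rightarrow> ('a \<times> 'd) \<Rightarrow> ('a \<times> 'd)" where
  "labeled_comb comb p q = (comb (fst p) (fst q), sup (snd p) (snd q))"

definition labeled_marg :: "('a \<Rightarrow> 'd \<Rightarrow> 'a) \<Rightarrow> ('a \<times> 'd) \<Rightarrow> 'd \<Rightarrow> ('a \<times> 'd)" where
  "labeled_marg foc p y = (foc (fst p) y, y)"

definition labeled_le :: "('a \<Rightarrow> 'a \<Rightarrow> 'a) \<Rightarrow> ('a \<times> 'd::lattice) \<Rightarrow> ('a \<times> 'd) \<Rightarrow> bool" where
  "labeled_le comb p q \<longleftrightarrow> labeled_comb comb p q = q"

definition labeled_slice :: "('a \<Rightarrow> 'd \<Rightarrow> 'a) \<Rightarrow> 'd \<Rightarrow> ('a \<times> 'd) set" where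
  "labeled_slice foc x = {p \<in> labeled_carrier foc. snd p = x}"

definition way_below_x ::
  "('a \<Rightarrow> 'a \<Rightarrow> 'a) \<Rightarrow> ('a \<Rightarrow> 'd::lattice \<Rightarrow> 'a) \<Rightarrow> 'd \<Rightarrow> ('a \<times> 'd) \<Rightarrow> ('a \<times> 'd) \<Rightarrow> bool" where
  "way_below_x comb foc x p q \<longleftrightarrow> way_below_in (labeled_le comb) (labeled_slice foc x) p q"

end

theory Submission
  imports Defs
begin

lemma dfI:
  assumes "domain_free_ia comb e foc"
  shows assoc: "comb (comb a b) c = comb a (comb b c)"
    and commu: "comb a b = comb b a"
    and neut: "comb e a = a"
    and foc2: "foc (comb (foc p x) q) x = comb (foc p x) (foc q x)"
    and absb: "comb q (foc q x) = q"
    and idem: "comb a a = a"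
proof -
  show "comb (comb a b) c = comb a (comb b c)" "comb a b = comb b a" "comb e a = a"
    "foc (comb (foc p x) q) x = comb (foc p x) (foc q x)" "comb q (foc q x) = q"
    using assms unfolding domain_free_ia_def by blast+
  from assms obtain y where "foc a y = a" unfolding domain_free_ia_def by blast
  moreover have "comb a (foc a y) = a" using assms unfolding domain_free_ia_def by blast
  ultimately show "comb a a = a" by simp
qed

lemma le_trans':
  assumes "domain_free_ia comb e foc" "info_le comb a b" "info_le comb b c"
  shows "info_le comb a c"
  using assms unfolding info_le_def by (metis assoc[OF assms(1)])

lemma foc_mono:
  assumes "domain_free_ia comb e foc" "info_le comb a u" "a = foc a x"
  shows "info_le comb a (foc u x)"
proof -
  have "foc u x = foc (comb (foc a x) u) x" using assms(2,3) unfolding info_le_def by simp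
  also have "\<dots> = comb a (foc u x)" using foc2[OF assms(1)] assms(3) by metis
  finally show ?thesis unfolding info_le_def by simp
qed

lemma foc_le:
  assumes "domain_free_ia comb e foc"
  shows "info_le comb (foc u x) u"
  unfolding info_le_def using absb[OF assms] commu[OF assms] by metis

lemma lab_le_iff: "labeled_le comb (a, x) (b, x) \<longleftrightarrow> info_le comb a b"
  unfolding labeled_le_def labeled_comb_def info_le_def by simp

lemma slice_mem: "p \<in> labeled_slice foc x \<longleftrightarrow> snd p = x \<and> foc (fst p) x = fst p"
  unfolding labeled_slice_def labeled_carrier_def by (cases p) auto

lemma wb_use:
  assumes "df_way_below comb a b" "directed_in (info_le comb) X"
    "is_lub_in (info_le comb) UNIV X s" "info_le comb b s"
  shows "\<exists>c\<in>X. info_le comb a c"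
  using assms unfolding df_way_below_def way_below_in_def by blast

lemma part1:
  assumes df: "domain_free_ia comb e foc"
    and wb: "df_way_below comb \<psi> \<phi>"
  shows "way_below_x comb foc x (\<psi>, x) (\<phi>, x)"
  unfolding way_below_x_def way_below_in_def
proof (intro allI impI)
  fix X s
  assume XS: "X \<subseteq> labeled_slice foc x" and dir: "directed_in (labeled_le comb) X"
    and lub: "is_lub_in (labeled_le comb) (labeled_slice foc x) X s"
    and ls: "labeled_le comb (\<phi>, x) s"
  have Xform: "\<And>p. p \<in> X \<Longrightarrow> p = (fst p, x) \<and> foc (fst p) x = fst p"
    using XS slice_mem by (metis prod.collapse subsetD)
  obtain \<sigma> where s: "s = (\<sigma>, x)" and sf: "foc \<sigma> x = \<sigma>"
    using lub slice_mem unfolding is_lub_in_def by (metis prod.collapse)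
  let ?X = "fst ` X"
  have dir': "directed_in (info_le comb) ?X"
    unfolding directed_in_def
  proof (intro conjI ballI)
    show "?X \<noteq> {}" using dir unfolding directed_in_def by blast
  next
    fix a b assume "a \<in> ?X" "b \<in> ?X"
    then obtain p q where pq: "p \<in> X" "q \<in> X" "a = fst p" "b = fst q" by blast
    then obtain r where r: "r \<in> X" "labeled_le comb p r" "labeled_le comb q r"
      using dir unfolding directed_in_def by blast
    have "info_le comb a (fst r)" "info_le comb b (fst r)"
      using r pq Xform lab_le_iff by metis+
    thus "\<exists>c\<in>?X. info_le comb a c \<and> info_le comb b c" using r(1) by blast
  qed
  have ub: "\<forall>a\<in>?X. info_le comb a \<sigma>"
  proof
    fix a assume "a \<in> ?X"
    then obtain p where p: "p \<in> X" "a = fst p" by blast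
    have "labeled_le comb p s" using lub p(1) unfolding is_lub_in_def by blast
    hence "labeled_le comb (a, x) (\<sigma>, x)" using Xform[OF p(1)] p(2) s by metis
    thus "info_le comb a \<sigma>" using lab_le_iff by metis
  qed
  have least: "\<forall>u. (\<forall>a\<in>?X. info_le comb a u) \<longrightarrow> info_le comb \<sigma> u"
  proof (intro allI impI)
    fix u assume u: "\<forall>a\<in>?X. info_le comb a u"
    have "\<forall>p\<in>X. labeled_le comb p (foc u x, x)"
    proof
      fix p assume p: "p \<in> X"
      have "info_le comb (fst p) u" using u p by blast
      hence "info_le comb (fst p) (foc u x)" using foc_mono[OF df] Xform[OF p] by metis
      thus "labeled_le comb p (foc u x, x)" using lab_le_iff Xform[OF p] by metis
    qed
    moreover have "(foc u x, x) \<in> labeled_slice foc x"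
      using slice_mem df unfolding domain_free_ia_def by (metis fst_conv inf.idem snd_conv)
    ultimately have "labeled_le comb s (foc u x, x)" using lub unfolding is_lub_in_def by blast
    hence "info_le comb \<sigma> (foc u x)" using s lab_le_iff by metis
    thus "info_le comb \<sigma> u" using le_trans'[OF df _ foc_le[OF df]] by blast
  qed
  have "is_lub_in (info_le comb) UNIV ?X \<sigma>" unfolding is_lub_in_def using ub least by blast
  moreover have "info_le comb \<phi> \<sigma>" using ls s lab_le_iff by metis
  ultimately obtain c where "c \<in> ?X" "info_le comb \<psi> c"
    using wb dir' unfolding df_way_below_def way_below_in_def by blast
  then obtain p where p: "p \<in> X" "info_le comb \<psi> (fst p)" by blast
  hence "labeled_le comb (\<psi>, x) (fst p, x)" using lab_le_iff by metis
  hence "labeled_le comb (\<psi>, x) p" using Xform[OF p(1)] by metis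
  thus "\<exists>c\<in>X. labeled_le comb (\<psi>, x) c" using p(1) by blast
qed

lemma part2:
  assumes df: "domain_free_ia comb e foc"
    and sc: "s_continuous_ia comb e foc"
    and \<phi>x: "\<phi> = foc \<phi> x"
    and wb: "way_below_x comb foc x (\<psi>, x) (\<phi>, x)"
  shows "df_way_below comb \<psi> \<phi>"
proof -
  obtain \<Gamma> where bc: "basis_cond comb e \<Gamma>" and
    L: "is_lub_in (info_le comb) UNIV {\<gamma>\<in>\<Gamma>. \<gamma> = foc \<gamma> x \<and> df_way_below comb \<gamma> \<phi>} (foc \<phi> x)"
    using sc unfolding s_continuous_ia_def by blast
  define B where "B = {\<gamma>\<in>\<Gamma>. \<gamma> = foc \<gamma> x \<and> df_way_below comb \<gamma> \<phi>}"
  have L': "is_lub_in (info_le comb) UNIV B \<phi>" unfolding B_def using L \<phi>x[symmetric] by simp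
  have eB: "e \<in> B"
  proof -
    have "e \<in> \<Gamma>" using bc unfolding basis_cond_def by blast
    moreover have "e = foc e x" using absb[OF df, of e x] neut[OF df] by metis
    moreover have "df_way_below comb e \<phi>"
      unfolding df_way_below_def way_below_in_def directed_in_def info_le_def
      using neut[OF df] by blast
    ultimately show ?thesis unfolding B_def by blast
  qed
  have upper: "info_le comb a (comb a b)" for a b
    unfolding info_le_def by (simp add: assoc[OF df, symmetric] idem[OF df])
  have combB: "comb a b \<in> B" if ab: "a \<in> B" "b \<in> B" for a b
  proof -
    have "comb a b \<in> \<Gamma>" using ab bc unfolding B_def basis_cond_def by blast
    moreover have "comb a b = foc (comb a b) x"
    proof -
      have fa: "foc a x = a" "foc b x = b" using ab unfolding B_def by (blast dest: sym)+
      show ?thesis using foc2[OF df, of a x b] fa by simp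
    qed
    moreover have "df_way_below comb (comb a b) \<phi>"
      unfolding df_way_below_def way_below_in_def
    proof (intro allI impI)
      fix X s assume "X \<subseteq> UNIV" and dX: "directed_in (info_le comb) X"
        and "is_lub_in (info_le comb) UNIV X s" and "info_le comb \<phi> s"
      note h = this
      have "df_way_below comb a \<phi>" "df_way_below comb b \<phi>" using ab unfolding B_def by blast+
      then obtain c1 c2 where "c1 \<in> X" "info_le comb a c1" "c2 \<in> X" "info_le comb b c2"
        using wb_use[OF _ dX h(3,4)] by meson
      then obtain c3 where "c3 \<in> X" "info_le comb c1 c3" "info_le comb c2 c3"
        using dX unfolding directed_in_def by blast
      hence "info_le comb a c3" "info_le comb b c3"
        using le_trans'[OF df] \<open>info_le comb a c1\<close> \<open>info_le comb b c2\<close> by blast+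
      hence "info_le comb (comb a b) c3" unfolding info_le_def by (simp add: assoc[OF df])
      thus "\<exists>c\<in>X. info_le comb (comb a b) c" using \<open>c3 \<in> X\<close> by blast
    qed
    ultimately show ?thesis unfolding B_def by blast
  qed
  define Y where "Y = (\<lambda>g. (g, x)) ` B"
  have YS: "Y \<subseteq> labeled_slice foc x"
  proof
    fix p assume "p \<in> Y"
    then obtain g where "g \<in> B" "p = (g, x)" unfolding Y_def by blast
    moreover from this have "foc g x = g" unfolding B_def by (blast dest: sym)
    ultimately show "p \<in> labeled_slice foc x" unfolding slice_mem by simp
  qed
  have dY: "directed_in (labeled_le comb) Y"
    unfolding directed_in_def Y_def
  proof (intro conjI ballI)
    show "(\<lambda>g. (g, x)) ` B \<noteq> {}" using eB by blast
  next
    fix p q assume "p \<in> (\<lambda>g. (g, x)) ` B" "q \<in> (\<lambda>g. (g, x)) ` B"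
    then obtain a b where "a \<in> B" "b \<in> B" "p = (a,x)" "q = (b,x)" by blast
    moreover have "info_le comb b (comb a b)" using upper[of b a] commu[OF df, of b a] by simp
    moreover have "info_le comb a (comb a b)" by (rule upper)
    ultimately have "labeled_le comb p (comb a b, x) \<and> labeled_le comb q (comb a b, x)"
      by (simp add: lab_le_iff)
    moreover have "(comb a b, x) \<in> (\<lambda>g. (g, x)) ` B" using combB \<open>a \<in> B\<close> \<open>b \<in> B\<close> by blast
    ultimately show "\<exists>c\<in>(\<lambda>g. (g, x)) ` B. labeled_le comb p c \<and> labeled_le comb q c"
      by blast
  qed
  have lY: "is_lub_in (labeled_le comb) (labeled_slice foc x) Y (\<phi>, x)"
    unfolding is_lub_in_def
  proof (intro conjI ballI impI)
    show "(\<phi>, x) \<in> labeled_slice foc x" unfolding slice_mem using \<phi>x[symmetric] by simp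
  next
    fix p assume "p \<in> Y" thus "labeled_le comb p (\<phi>, x)"
      using L' unfolding Y_def is_lub_in_def by (auto simp: lab_le_iff)
  next
    fix u assume "u \<in> labeled_slice foc x" "\<forall>p\<in>Y. labeled_le comb p u"
    then obtain v where u: "u = (v, x)" using slice_mem by (metis prod.collapse)
    hence "\<forall>a\<in>B. info_le comb a v" using \<open>\<forall>p\<in>Y. _\<close> unfolding Y_def by (auto simp: lab_le_iff)
    hence "info_le comb \<phi> v" using L' unfolding is_lub_in_def by blast
    thus "labeled_le comb (\<phi>, x) u" using u lab_le_iff by metis
  qed
  have "labeled_le comb (\<phi>, x) (\<phi>, x)" by (simp add: lab_le_iff info_le_def idem[OF df])
  then obtain c where "c \<in> Y" "labeled_le comb (\<psi>, x) c"
    using wb[unfolded way_below_x_def way_below_in_def, rule_format, OF YS dY lY] by blast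
  then obtain g where g: "g \<in> B" "info_le comb \<psi> g" unfolding Y_def by (auto simp: lab_le_iff)
  have gw: "df_way_below comb g \<phi>" using g(1) unfolding B_def by blast
  show ?thesis unfolding df_way_below_def way_below_in_def
  proof (intro allI impI)
    fix X s assume "X \<subseteq> (UNIV::'a set)" "directed_in (info_le comb) X"
      "is_lub_in (info_le comb) UNIV X s" "info_le comb \<phi> s"
    then obtain c where "c \<in> X" "info_le comb g c"
      using wb_use[OF gw] by blast
    thus "\<exists>c\<in>X. info_le comb \<psi> c" using le_trans'[OF df g(2)] by blast
  qed
qed

theorem lemma4p6:
  fixes comb :: "'a \<Rightarrow> 'a \<Rightarrow> 'a" and e :: 'a and foc :: "'a \<Rightarrow> 'd::lattice \<Rightarrow> 'a"
    and x :: 'd and \<psi> \<phi> :: 'a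
  assumes "domain_free_ia comb e foc"
    and "continuous_ia comb e foc"
    and "\<psi> = foc \<psi> x" and "\<phi> = foc \<phi> x"
  shows "(df_way_below comb \<psi> \<phi> \<longrightarrow> way_below_x comb foc x (\<psi>, x) (\<phi>, x))
     \<and> (s_continuous_ia comb e foc \<longrightarrow>
          (df_way_below comb \<psi> \<phi> \<longleftrightarrow> way_below_x comb foc x (\<psi>, x) (\<phi>, x)))"
  using part1[OF assms(1)] part2[OF assms(1) _ assms(4)] by blast

end
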